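(* Let $n\geq 1$ and let $\pi\in S_n$ be a 321-avoiding permutation. Let $A_\pi$ be the linear Nakayama algebra (with $n+1$ simple modules) associated to $\pi$. Then the number of indecomposable projective $A_\pi$-modules (up to isomorphism) of injective dimension exactly one equals the number of fixed points of $\pi$.
   Context: $K$ is a field. A linear Nakayama algebra with $m$ simple modules is a (connected) algebra $A=KQ/I$ with $Q$ the linearly oriented quiver $0\to 1\to\cdots\to m-1$ and $I$ an admissible ideal; modules are finite-dimensional right modules, $e_i$ are the primitive idempotents, $S_i$ the simple modules. The indecomposable projective $e_iA$ is uniserial with composition factors $S_i,S_{i+1},\dots,S_{i+c_i-1}$ (top to socle), where $c_i=\dim_K e_iA$; $A$ is determined up to isomorphism by its Kupisch series $[c_0,\dots,c_{m-1}]$, and every indecomposable module is isomorphic to $e_iA/e_iJ^k$ for some $i$ and $1\le k\le c_i$ ($J$ the Jacobson radical). To such $A$ with $m=n+1$ simple modules one associates the Dyck path $\mathcal D_A$ of semilength $n$ (the top boundary of its Auslander–Reiten quiver): the lattice path from $(0,0)$ to $(2n,0)$ whose vertex with first coordinate $x$ has height $h(x)=\max\{k-1 : 0\le i\le n,\ 1\le k\le c_i,\ 2i+k-1=2n-x\}$. This gives a bijection between isomorphism classes of linear Nakayama algebras with $n+1$ simple modules and Dyck paths of semilength $n$ (paths with steps $u=(1,1)$, $d=(1,-1)$ from $(0,0)$ to $(2n,0)$ never going below $y=0$). Billey–Jockusch–Stanley bijection: write a Dyck path of semilength $n$ as $u^{a_1}d^{d_1}u^{a_2}d^{d_2}\cdots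 u^{a_\ell}d^{d_\ell}$ with all $a_i,d_i\ge 1$; set $A_j=a_1+\dots+a_j$ and $D_j=d_1+\dots+d_j$ for $1\le j\le \ell-1$. Define $\pi(D_j)=A_j+1$ for $1\le j\le\ell-1$, and fill the remaining positions $[n]\setminus\{D_1,\dots,D_{\ell-1}\}$ in increasing order with the remaining values $[n]\setminus\{A_1+1,\dots,A_{\ell-1}+1\}$. This is a bijection from Dyck paths of semilength $n$ to 321-avoiding permutations of $[n]$ (permutations with no $i<j<k$ and $\pi(k)<\pi(j)<\pi(i)$). $A_\pi$ denotes the linear Nakayama algebra whose Dyck path $\mathcal D_{A_\pi}$ is mapped to $\pi$ by this bijection. *)

theory Defs
  imports "HOL-Combinatorics.Permutations"
begin

text \<open>A linear Nakayama algebra with m simple modules is encoded (up to isomorphism)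
by its Kupisch series, a list c of length m with c!i = dim e_i A.
Connectedness and admissibility of the ideal amount to: the last entry is 1,
all other entries are at least 2, and c!(i+1) \<ge> c!i - 1.\<close>

definition kupisch :: "nat list \<Rightarrow> bool" where
  "kupisch c \<longleftrightarrow> c \<noteq> [] \<and> last c = 1 \<and>
     (\<forall>i. Suc i < length c \<longrightarrow> c!i \<ge> 2 \<and> c!(Suc i) + 1 \<ge> c!i)"

text \<open>Indecomposable modules e_iA/e_iJ^k are encoded as pairs (i,k), with composition
factors S_i,...,S_(i+k-1); k = 0 encodes the zero module.\<close>

definition ind_module :: "nat list \<Rightarrow> nat \<times> nat \<Rightarrow> bool" where
  "ind_module c M \<longleftrightarrow> fst M < length c \<and> 1 \<le> snd M \<and> snd M \<le> c ! fst M"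

text \<open>The injective envelope I(s) of S_s is the longest uniserial module with socle S_s,
namely (i0, s - i0 + 1) where i0 is the least i with s \<le> i + c_i - 1.\<close>

definition inj_start :: "nat list \<Rightarrow> nat \<Rightarrow> nat" where
  "inj_start c s = (LEAST i. s < i + c ! i)"

definition is_injective :: "nat list \<Rightarrow> nat \<times> nat \<Rightarrow> bool" where
  "is_injective c M \<longleftrightarrow> 1 \<le> snd M \<and> inj_start c (fst M + snd M - 1) = fst M"

text \<open>Cosyzygy: cokernel of the injective envelope M \<rightarrow> I(soc M), i.e. I(s)/M.\<close>

definition cosyz :: "nat list \<Rightarrow> nat \<times> nat \<Rightarrow> nat \<times> nat" where
  "cosyz c M = (let i0 = inj_start c (fst M + snd M - 1) in (i0, fst M - i0))"

definition inj_dim_eq :: "nat list \<Rightarrow> nat \<times> nat \<Rightarrow> nat \<Rightarrow> bool" where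
  "inj_dim_eq c M d \<longleftrightarrow>
     (\<forall>j<d. \<not> is_injective c ((cosyz c ^^ j) M)) \<and> is_injective c ((cosyz c ^^ d) M)"

definition dyck_height :: "nat list \<Rightarrow> nat \<Rightarrow> nat" where
  "dyck_height c x = (let n = length c - 1 in
     Max {k - 1 | i k. i \<le> n \<and> 1 \<le> k \<and> k \<le> c ! i \<and> 2*i + k - 1 = 2*n - x})"

definition up_step :: "nat list \<Rightarrow> nat \<Rightarrow> bool" where
  "up_step c x \<longleftrightarrow> dyck_height c (Suc x) = dyck_height c x + 1"

definition valleys :: "nat list \<Rightarrow> nat set" where
  "valleys c = {p. 0 < p \<and> p < 2 * (length c - 1) \<and> \<not> up_step c (p - 1) \<and> up_step c p}"

definition ups_before :: "nat list \<Rightarrow> nat \<Rightarrow> nat" where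
  "ups_before c p = card {y. y < p \<and> up_step c y}"

definition downs_before :: "nat list \<Rightarrow> nat \<Rightarrow> nat" where
  "downs_before c p = card {y. y < p \<and> \<not> up_step c y}"

text \<open>Billey-Jockusch-Stanley: pi is the permutation of [n] associated to the Dyck path of c.\<close>

definition BJS_perm :: "nat list \<Rightarrow> (nat \<Rightarrow> nat) \<Rightarrow> bool" where
  "BJS_perm c \<pi> \<longleftrightarrow> (let n = length c - 1;
       Ds = downs_before c ` valleys c in
     \<pi> permutes {1..n} \<and>
     (\<forall>p \<in> valleys c. \<pi> (downs_before c p) = ups_before c p + 1) \<and>
     (\<forall>x y. x \<in> {1..n} - Ds \<longrightarrow> y \<in> {1..n} - Ds \<longrightarrow> x < y \<longrightarrow> \<pi> x < \<pi> y))"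

definition avoids_321 :: "nat \<Rightarrow> (nat \<Rightarrow> nat) \<Rightarrow> bool" where
  "avoids_321 n \<pi> \<longleftrightarrow> \<not> (\<exists>i j k. 1 \<le> i \<and> i < j \<and> j < k \<and> k \<le> n \<and> \<pi> k < \<pi> j \<and> \<pi> j < \<pi> i)"

end

theory Submission
  imports Defs
begin

definition ff :: "nat list \<Rightarrow> nat \<Rightarrow> nat" where "ff c j = j + c!j"
definition ee :: "nat list \<Rightarrow> nat \<Rightarrow> nat" where "ee c j = 2*j + c!j - 1"

context
  fixes c :: "nat list" and n :: nat
  assumes K: "kupisch c" and Lc: "length c = Suc n"
begin

lemma c_last: "c!n = 1"
  using K Lc unfolding kupisch_def by (metis diff_Suc_1 last_conv_nth)

lemma c_ge2: "j < n \<Longrightarrow> c!j \<ge> 2"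
  using K Lc unfolding kupisch_def by auto

lemma c_ge1: "j \<le> n \<Longrightarrow> c!j \<ge> 1"
  using c_ge2[of j] c_last by (cases "j = n") auto

lemma c_step: "j < n \<Longrightarrow> c!(Suc j) + 1 \<ge> c!j"
  using K Lc unfolding kupisch_def by auto

lemma ff_step: "j < n \<Longrightarrow> ff c j \<le> ff c (Suc j)"
  using c_step[of j] unfolding ff_def by auto

lemma ff_mono: "j \<le> k \<Longrightarrow> k \<le> n \<Longrightarrow> ff c j \<le> ff c k"
proof (induction k)
  case 0 then show ?case by auto
next
  case (Suc k)
  show ?case
  proof (cases "j = Suc k")
    case False
    then have "j \<le> k" using Suc by auto
    then show ?thesis using Suc ff_step[of k] by auto
  qed auto
qed

lemma ff_n: "ff c n = Suc n" using c_last unfolding ff_def by auto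

lemma ff_ge: "j \<le> n \<Longrightarrow> ff c j \<ge> Suc j" using c_ge1[of j] unfolding ff_def by auto
lemma ff_ge2: "j < n \<Longrightarrow> ff c j \<ge> Suc (Suc j)" using c_ge2[of j] unfolding ff_def by auto
lemma ff_le: "j \<le> n \<Longrightarrow> ff c j \<le> Suc n" using ff_mono[of j n] ff_n by auto

lemma ee_ff: "j \<le> n \<Longrightarrow> ee c j = j + ff c j - 1"
  unfolding ee_def ff_def by auto

lemma ee_step: "j < n \<Longrightarrow> ee c j < ee c (Suc j)"
  using c_step[of j] c_ge1[of j] c_ge1[of "Suc j"] unfolding ee_def by auto

lemma ee_mono: "j < k \<Longrightarrow> k \<le> n \<Longrightarrow> ee c j < ee c k"
proof (induction k)
  case 0 then show ?case by auto
next
  case (Suc k)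
  show ?case
  proof (cases "j = k")
    case True then show ?thesis using Suc ee_step[of k] by auto
  next
    case False
    then show ?thesis using Suc ee_step[of k] by auto
  qed
qed

lemma ee_mono_iff: "j \<le> n \<Longrightarrow> k \<le> n \<Longrightarrow> ee c j < ee c k \<longleftrightarrow> j < k"
  using ee_mono[of j k] ee_mono[of k j] by (metis less_asym' linorder_neqE_nat)

lemma ee_inj: "j \<le> n \<Longrightarrow> k \<le> n \<Longrightarrow> ee c j = ee c k \<longleftrightarrow> j = k"
  using ee_mono[of j k] ee_mono[of k j] by (metis less_irrefl linorder_neqE_nat)

lemma ee_n: "ee c n = 2*n" using c_last unfolding ee_def by auto

lemma ee_lt: "j < n \<Longrightarrow> ee c j < 2*n" using ee_mono[of j n] ee_n by auto

lemma ff_step_lemma: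
  "q \<le> n \<Longrightarrow> r < q \<Longrightarrow> ff c r < ff c q \<Longrightarrow> \<exists>j. r \<le> j \<and> j < q \<and> ff c j < ff c (Suc j)"
proof (induction q)
  case 0 then show ?case by auto
next
  case (Suc q)
  show ?case
  proof (cases "ff c q < ff c (Suc q)")
    case True then show ?thesis using Suc by (intro exI[of _ q]) auto
  next
    case False
    then have "ff c r < ff c q" using Suc by auto
    then have "r < q" using Suc by (metis less_antisym less_irrefl)
    then show ?thesis using Suc \<open>ff c r < ff c q\<close> by (metis less_SucI Suc_leD)
  qed
qed

definition PP :: "nat \<Rightarrow> nat" where "PP s = (LEAST k. s < ff c k)"

lemma inj_start_PP: "inj_start c s = PP s"
  unfolding inj_start_def PP_def ff_def by simp

lemma PP_props:
  assumes "s \<le> n"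
  shows "PP s \<le> s" "s < ff c (PP s)" "\<And>k. k < PP s \<Longrightarrow> ff c k \<le> s"
proof -
  have ex: "s < ff c s" using c_ge1[of s] assms unfolding ff_def by auto
  show "PP s \<le> s" unfolding PP_def using ex by (rule Least_le)
  show "s < ff c (PP s)" unfolding PP_def using ex by (rule LeastI)
  show "\<And>k. k < PP s \<Longrightarrow> ff c k \<le> s" unfolding PP_def using not_less_Least by fastforce
qed

lemma PP_le: "s \<le> n \<Longrightarrow> s < ff c k \<Longrightarrow> PP s \<le> k"
  unfolding PP_def by (rule Least_le)

lemma lhs_char:
  assumes "i \<le> n"
  shows "inj_dim_eq c (i, c!i) 1 \<longleftrightarrow>
     (1 \<le> i \<and> \<not> (\<exists>j. j < n \<and> ff c j < ff c (Suc j) \<and> j < i \<and> i \<le> ff c j))"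
proof -
  define q where "q = PP (ff c i - 1)"
  have ci: "c!i \<ge> 1" using c_ge1 assms by auto
  have s_le: "ff c i - 1 \<le> n" using ff_le[OF assms] by auto
  have q1: "q \<le> ff c i - 1" "ff c i - 1 < ff c q" "\<And>k. k < q \<Longrightarrow> ff c k \<le> ff c i - 1"
    using PP_props[OF s_le] unfolding q_def by auto
  have qi: "q \<le> i" unfolding q_def using PP_le[OF s_le, of i] ff_ge[OF assms] by auto
  have ffq: "ff c q = ff c i" using q1(2) ff_mono[OF qi assms] by auto
  have eq1: "inj_dim_eq c (i, c!i) 1 \<longleftrightarrow> q \<noteq> i \<and> 1 \<le> i - q \<and> PP (q + (i - q) - 1) = q"
    unfolding inj_dim_eq_def is_injective_def cosyz_def Let_def inj_start_PP q_def
    using ci by (auto simp: ff_def less_Suc_eq)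
  show ?thesis
  proof
    assume H: "inj_dim_eq c (i, c!i) 1"
    then have qi': "q < i" and r: "PP (i - 1) = q" using eq1 qi by auto
    show "1 \<le> i \<and> \<not> (\<exists>j. j < n \<and> ff c j < ff c (Suc j) \<and> j < i \<and> i \<le> ff c j)"
    proof (intro conjI notI)
      show "1 \<le> i" using qi' by auto
    next
      assume "\<exists>j. j < n \<and> ff c j < ff c (Suc j) \<and> j < i \<and> i \<le> ff c j"
      then obtain j where j: "j < n" "ff c j < ff c (Suc j)" "j < i" "i \<le> ff c j" by auto
      have "PP (i - 1) \<le> j" using PP_le[of "i-1" j] j assms by auto
      then have "q \<le> j" using r by auto
      then have "ff c q \<le> ff c j" using ff_mono j by auto
      moreover have "ff c (Suc j) \<le> ff c i" using ff_mono[of "Suc j" i] j assms by auto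
      ultimately show False using ffq j by auto
    qed
  next
    assume H: "1 \<le> i \<and> \<not> (\<exists>j. j < n \<and> ff c j < ff c (Suc j) \<and> j < i \<and> i \<le> ff c j)"
    have qi': "q < i"
    proof (rule ccontr)
      assume "\<not> q < i"
      then have "q = i" using qi by auto
      moreover have "i - 1 < q" using \<open>q = i\<close> H by auto
      ultimately have "ff c (i - 1) < ff c i" using q1(3)[of "i-1"] ff_ge[OF assms] by fastforce
      moreover have "i \<le> ff c (i - 1)" using ff_ge[of "i-1"] H assms by auto
      moreover have "i - 1 < n" using H assms by auto
      moreover have "Suc (i - 1) = i" using H by auto
      ultimately show False using H by (metis diff_less zero_less_one less_le_trans)
    qed
    define r where "r = PP (i - 1)"
    have rs: "i - 1 \<le> n" using assms by auto
    have r1: "i - 1 < ff c r" "\<And>k. k < r \<Longrightarrow> ff c k \<le> i - 1"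
      using PP_props[OF rs] unfolding r_def by auto
    have rq: "r \<le> q" unfolding r_def using PP_le[OF rs, of q] ffq ff_ge[OF assms] by auto
    have "r = q"
    proof (rule ccontr)
      assume "r \<noteq> q"
      then have rq': "r < q" using rq by auto
      have "ff c r < ff c q" using q1(3)[OF rq'] ffq ff_ge[OF assms] by auto
      then obtain j where j: "r \<le> j" "j < q" "ff c j < ff c (Suc j)"
        using ff_step_lemma[of q r] rq' qi' assms by auto
      have "ff c r \<le> ff c j" using ff_mono[of r j] j qi' assms by auto
      then have "i \<le> ff c j" using r1 H by auto
      then show False using H j qi' assms by auto
    qed
    then show "inj_dim_eq c (i, c!i) 1" using eq1 qi' r_def by auto
  qed
qed

definition mm :: "nat \<Rightarrow> nat" where "mm y = (LEAST j. y \<le> ee c j)"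

lemma mm_props:
  assumes "y \<le> 2*n"
  shows "mm y \<le> n" "y \<le> ee c (mm y)" "\<And>k. k < mm y \<Longrightarrow> ee c k < y" "2 * mm y \<le> y"
proof -
  have ex: "y \<le> ee c n" using ee_n assms by auto
  show a: "mm y \<le> n" unfolding mm_def using ex by (rule Least_le)
  show "y \<le> ee c (mm y)" unfolding mm_def using ex by (rule LeastI)
  show b: "\<And>k. k < mm y \<Longrightarrow> ee c k < y" unfolding mm_def using not_less_Least by fastforce
  show "2 * mm y \<le> y"
  proof (cases "mm y")
    case 0 then show ?thesis by auto
  next
    case (Suc m)
    then have "ee c m < y" using b by auto
    moreover have "c!m \<ge> 2" using c_ge2[of m] a Suc by auto
    ultimately show ?thesis using Suc unfolding ee_def by auto
  qed
qed

lemma mm_le: "y \<le> ee c k \<Longrightarrow> mm y \<le> k"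
  unfolding mm_def by (rule Least_le)

lemma height_eq:
  assumes "x \<le> 2*n"
  shows "dyck_height c x = (2*n - x) - 2 * mm (2*n - x)"
proof -
  define y where "y = 2*n - x"
  have y: "y \<le> 2*n" unfolding y_def by auto
  define m where "m = mm y"
  note mp = mm_props[OF y, folded m_def]
  define S where "S = {k - 1 | i k. i \<le> n \<and> 1 \<le> k \<and> k \<le> c ! i \<and> 2*i + k - 1 = y}"
  have ln: "length c - 1 = n" using Lc by auto
  have hd: "dyck_height c x = Max S" unfolding dyck_height_def Let_def ln S_def y_def by simp
  have fin: "finite S"
  proof (rule finite_subset[of S "{..y}"])
    show "S \<subseteq> {..y}" unfolding S_def by auto
  qed auto
  have mem: "y - 2*m \<in> S"
  proof -
    have cm: "c!m \<ge> 1" using c_ge1 mp by auto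
    have "y - 2*m + 1 \<le> c!m" using mp(2) cm unfolding ee_def by auto
    then show ?thesis unfolding S_def using mp cm
      by (intro CollectI exI[of _ m] exI[of _ "y - 2*m + 1"]) auto
  qed
  have ub: "\<And>z. z \<in> S \<Longrightarrow> z \<le> y - 2*m"
  proof -
    fix z assume "z \<in> S"
    then obtain i k where ik: "z = k - 1" "i \<le> n" "1 \<le> k" "k \<le> c!i" "2*i + k - 1 = y"
      unfolding S_def by auto
    have "y \<le> ee c i" using ik unfolding ee_def by auto
    then have "m \<le> i" using mm_le unfolding m_def by auto
    then show "z \<le> y - 2*m" using ik by auto
  qed
  have "Max S = y - 2*m" using fin mem ub by (intro Max_eqI) auto
  then show ?thesis using hd unfolding y_def m_def by simp
qed

lemma up_step_char:
  assumes "x < 2*n"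
  shows "up_step c x \<longleftrightarrow> (\<exists>j\<le>n. ee c j = 2*n - x - 1)"
proof -
  define y where "y = 2*n - x"
  have y1: "y \<ge> 1" "y \<le> 2*n" using assms unfolding y_def by auto
  have y2: "y - 1 \<le> 2*n" using y1 by auto
  have h0: "dyck_height c x = y - 2 * mm y" using height_eq[of x] assms unfolding y_def by auto
  have h1: "dyck_height c (Suc x) = (y - 1) - 2 * mm (y - 1)"
    using height_eq[of "Suc x"] assms unfolding y_def by (auto simp: diff_Suc)
  note A = mm_props[OF y1(2)] and B = mm_props[OF y2]
  show ?thesis
  proof
    assume "up_step c x"
    then have u: "dyck_height c (Suc x) = dyck_height c x + 1" unfolding up_step_def by auto
    show "\<exists>j\<le>n. ee c j = 2*n - x - 1"
    proof (rule ccontr)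
      assume nj: "\<not> (\<exists>j\<le>n. ee c j = 2*n - x - 1)"
      have "ee c (mm (y-1)) \<noteq> y - 1" using nj B(1) unfolding y_def by auto
      then have "y \<le> ee c (mm (y - 1))" using B(2) by auto
      then have "mm y \<le> mm (y - 1)" by (rule mm_le)
      moreover have "mm (y - 1) \<le> mm y" using A(2) by (intro mm_le) auto
      ultimately have "mm y = mm (y - 1)" by auto
      then show False using u h0 h1 B(4) y1 by auto
    qed
  next
    assume "\<exists>j\<le>n. ee c j = 2*n - x - 1"
    then obtain j where j: "j \<le> n" "ee c j = y - 1" unfolding y_def by auto
    have jn: "j < n" proof (rule ccontr)
      assume "\<not> j < n"
      then have "j = n" using j by auto
      then show False using j ee_n y1 by auto
    qed
    have m1: "mm (y - 1) = j"
    proof (rule antisym)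
      show "mm (y - 1) \<le> j" using j by (intro mm_le) auto
      show "j \<le> mm (y - 1)"
      proof (rule ccontr)
        assume "\<not> j \<le> mm (y - 1)"
        then have "ee c (mm (y-1)) < ee c j" using ee_mono[of "mm (y-1)" j] j by auto
        then show False using B(2) j by auto
      qed
    qed
    have m2: "mm y = Suc j"
    proof (rule antisym)
      show "mm y \<le> Suc j" using ee_step[OF jn] j y1 by (intro mm_le) auto
      show "Suc j \<le> mm y"
      proof (rule ccontr)
        assume "\<not> Suc j \<le> mm y"
        then have "ee c (mm y) \<le> ee c j" using ee_mono[of "mm y" j] j by (cases "mm y = j") auto
        then show False using A(2) j y1 by auto
      qed
    qed
    show "up_step c x" unfolding up_step_def using h0 h1 m1 m2 A(4) by auto
  qed
qed

lemma ups_set: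
  assumes "p \<le> 2*n"
  shows "{y. y < p \<and> up_step c y} = (\<lambda>k. 2*n - 1 - ee c k) ` {k. k < n \<and> 2*n - p \<le> ee c k}"
proof (rule set_eqI, rule iffI)
  fix y assume "y \<in> {y. y < p \<and> up_step c y}"
  then have y: "y < p" "up_step c y" by auto
  then obtain j where j: "j \<le> n" "ee c j = 2*n - y - 1" using up_step_char[of y] assms by auto
  have jn: "j < n"
  proof (rule ccontr)
    assume "\<not> j < n" then have "j = n" using j by auto
    then show False using j ee_n y assms by auto
  qed
  show "y \<in> (\<lambda>k. 2*n - 1 - ee c k) ` {k. k < n \<and> 2*n - p \<le> ee c k}"
    using j jn y assms by (intro image_eqI[of _ _ j]) auto
next
  fix y assume "y \<in> (\<lambda>k. 2*n - 1 - ee c k) ` {k. k < n \<and> 2*n - p \<le> ee c k}"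
  then obtain k where k: "k < n" "2*n - p \<le> ee c k" "y = 2*n - 1 - ee c k" by auto
  have ek: "ee c k < 2*n" using ee_lt k by auto
  have yl: "y < 2*n" "y < p" using k ek assms by auto
  have "up_step c y" using up_step_char[OF yl(1)] k ek by (intro iffD2[OF up_step_char[OF yl(1)]] exI[of _ k]) auto
  then show "y \<in> {y. y < p \<and> up_step c y}" using yl by auto
qed

lemma ups_card:
  assumes "p \<le> 2*n"
  shows "ups_before c p = card {k. k < n \<and> 2*n - p \<le> ee c k}"
proof -
  have "inj_on (\<lambda>k. 2*n - 1 - ee c k) {k. k < n \<and> 2*n - p \<le> ee c k}"
  proof (rule inj_onI)
    fix a b assume a: "a \<in> {k. k < n \<and> 2*n - p \<le> ee c k}" and b: "b \<in> {k. k < n \<and> 2*n - p \<le> ee c k}"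
      and e: "2*n - 1 - ee c a = 2*n - 1 - ee c b"
    have "ee c a < 2*n" "ee c b < 2*n" using a b ee_lt by auto
    then have "ee c a = ee c b" using e by auto
    then show "a = b" using ee_inj a b by auto
  qed
  then show ?thesis unfolding ups_before_def ups_set[OF assms] by (rule card_image)
qed

lemma downs_card: "downs_before c p = p - ups_before c p"
proof -
  have "{y. y < p \<and> \<not> up_step c y} = {..<p} - {y. y < p \<and> up_step c y}" by auto
  moreover have "card ({..<p} - {y. y < p \<and> up_step c y}) = p - card {y. y < p \<and> up_step c y}"
    by (subst card_Diff_subset) auto
  ultimately show ?thesis unfolding downs_before_def ups_before_def by simp
qed

definition JJ :: "nat set" where "JJ = {j. j < n \<and> ff c j < ff c (Suc j)}"

lemma ee_Suc_iff: "j < n \<Longrightarrow> ee c (Suc j) = Suc (ee c j) \<longleftrightarrow> ff c (Suc j) = ff c j"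
  using ee_ff[of j] ee_ff[of "Suc j"] ff_ge[of j] ff_ge[of "Suc j"] by auto

lemma JJ_ee: "j \<in> JJ \<Longrightarrow> Suc (Suc (ee c j)) \<le> 2*n"
proof -
  assume j: "j \<in> JJ"
  then have jn: "j < n" and f: "ff c j < ff c (Suc j)" unfolding JJ_def by auto
  have "ee c j < ee c (Suc j)" using ee_step jn by auto
  moreover have "ee c (Suc j) \<noteq> Suc (ee c j)" using ee_Suc_iff[OF jn] f by auto
  moreover have "ee c (Suc j) \<le> 2*n" using ee_mono[of "Suc j" n] ee_n jn by (cases "Suc j = n") auto
  ultimately show ?thesis by auto
qed

lemma valleys_eq: "valleys c = (\<lambda>j. 2*n - 1 - ee c j) ` JJ"
proof (rule set_eqI, rule iffI)
  fix p assume "p \<in> valleys c"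
  then have p: "0 < p" "p < 2*n" "\<not> up_step c (p - 1)" "up_step c p"
    unfolding valleys_def using Lc by auto
  obtain j where j: "j \<le> n" "ee c j = 2*n - p - 1" using up_step_char[of p] p by auto
  have jn: "j < n"
  proof (rule ccontr)
    assume "\<not> j < n" then have "j = n" using j by auto
    then show False using j ee_n p by auto
  qed
  have nu: "\<not> (\<exists>k\<le>n. ee c k = 2*n - (p - 1) - 1)" using up_step_char[of "p-1"] p by auto
  have eq: "2*n - (p - 1) - 1 = Suc (ee c j)" using j p by auto
  have "ee c (Suc j) \<noteq> Suc (ee c j)" using nu[unfolded eq] jn by auto
  then have "ff c (Suc j) \<noteq> ff c j" using ee_Suc_iff[OF jn] by auto
  then have "j \<in> JJ" using ff_step[OF jn] jn unfolding JJ_def by auto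
  then show "p \<in> (\<lambda>j. 2*n - 1 - ee c j) ` JJ" using j p by (intro image_eqI[of _ _ j]) auto
next
  fix p assume "p \<in> (\<lambda>j. 2*n - 1 - ee c j) ` JJ"
  then obtain j where j: "j \<in> JJ" "p = 2*n - 1 - ee c j" by auto
  have jn: "j < n" and f: "ff c j < ff c (Suc j)" using j unfolding JJ_def by auto
  have b: "Suc (Suc (ee c j)) \<le> 2*n" using JJ_ee j by auto
  have p1: "0 < p" "p < 2*n" using j b by auto
  have "up_step c p" using j b jn by (intro iffD2[OF up_step_char[OF p1(2)]] exI[of _ j]) auto
  moreover have "\<not> up_step c (p - 1)"
  proof
    assume "up_step c (p - 1)"
    moreover have "p - 1 < 2*n" using p1 by auto
    ultimately obtain k where k: "k \<le> n" "ee c k = 2*n - (p - 1) - 1" using up_step_char[of "p-1"] by blast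
    then have k2: "ee c k = Suc (ee c j)" using j b by auto
    then have "j < k" using ee_mono_iff[of j k] k jn by auto
    moreover have "k \<le> Suc j"
    proof (rule ccontr)
      assume "\<not> k \<le> Suc j"
      then have "ee c (Suc j) < ee c k" using ee_mono[of "Suc j" k] k by auto
      then show False using k2 ee_step[OF jn] by auto
    qed
    ultimately have "k = Suc j" by auto
    then show False using k2 ee_Suc_iff[OF jn] f by auto
  qed
  ultimately show "p \<in> valleys c" unfolding valleys_def using p1 Lc by auto
qed

lemma valley_counts:
  assumes "j \<in> JJ"
  shows "ups_before c (2*n - 1 - ee c j) = n - 1 - j"
    "downs_before c (2*n - 1 - ee c j) = n + 1 - ff c j"
proof -
  have jn: "j < n" using assms unfolding JJ_def by auto
  have b: "Suc (Suc (ee c j)) \<le> 2*n" using JJ_ee assms by auto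
  have "{k. k < n \<and> 2*n - (2*n - 1 - ee c j) \<le> ee c k} = {Suc j..<n}"
  proof (rule set_eqI)
    fix k
    have "2*n - (2*n - 1 - ee c j) = Suc (ee c j)" using b by auto
    moreover have "k < n \<Longrightarrow> Suc (ee c j) \<le> ee c k \<longleftrightarrow> j < k" using ee_mono_iff[of j k] jn by auto
    ultimately show "k \<in> {k. k < n \<and> 2*n - (2*n - 1 - ee c j) \<le> ee c k} \<longleftrightarrow> k \<in> {Suc j..<n}" by auto
  qed
  then show u: "ups_before c (2*n - 1 - ee c j) = n - 1 - j"
    using ups_card[of "2*n - 1 - ee c j"] by auto
  show "downs_before c (2*n - 1 - ee c j) = n + 1 - ff c j"
    unfolding downs_card u using ee_ff[of j] ff_ge[of j] jn b by auto
qed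

end

lemma count_split:
  assumes "X \<subseteq> {1..n}" "x \<le> Suc n"
  shows "card {s \<in> {1..n} - X. s < x} + card {d \<in> X. d < x} = x - 1"
proof -
  have "{s \<in> {1..n} - X. s < x} \<union> {d \<in> X. d < x} = {1..<x}" using assms by auto
  moreover have "{s \<in> {1..n} - X. s < x} \<inter> {d \<in> X. d < x} = {}" by auto
  moreover have "finite {s \<in> {1..n} - X. s < x}" "finite {d \<in> X. d < x}"
    using assms by (auto intro: finite_subset[of _ "{1..n}"])
  ultimately show ?thesis by (metis card_Un_disjoint card_atLeastLessThan)
qed

lemma card_lt_img:
  assumes "inj_on D J"
  shows "card {d \<in> D ` J. d < x} = card {j \<in> J. D j < x}"
proof -
  have "{d \<in> D ` J. d < x} = D ` {j \<in> J. D j < x}" by auto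
  moreover have "inj_on D {j \<in> J. D j < x}" using assms by (rule inj_on_subset) auto
  ultimately show ?thesis by (simp add: card_image)
qed

lemma fix_char:
  fixes \<pi> :: "nat \<Rightarrow> nat"
  assumes perm: "\<pi> permutes {1..n}" and fJ: "finite J"
    and DV: "\<And>j. j \<in> J \<Longrightarrow> D j < V j"
    and iD: "inj_on D J" and iV: "inj_on V J"
    and rng: "\<And>j. j \<in> J \<Longrightarrow> D j \<in> {1..n} \<and> V j \<in> {1..n}"
    and map: "\<And>j. j \<in> J \<Longrightarrow> \<pi> (D j) = V j"
    and mono: "\<And>x y. x \<in> {1..n} - D ` J \<Longrightarrow> y \<in> {1..n} - D ` J \<Longrightarrow> x < y \<Longrightarrow> \<pi> x < \<pi> y"
    and x: "x \<in> {1..n}"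
  shows "\<pi> x = x \<longleftrightarrow> \<not> (\<exists>j\<in>J. D j \<le> x \<and> x \<le> V j)"
proof (cases "x \<in> D ` J")
  case True
  then obtain j where j: "j \<in> J" "x = D j" by auto
  then show ?thesis using map[OF j(1)] DV[OF j(1)] by auto
next
  case False
  define S where "S = {1..n} - D ` J"
  define T where "T = {1..n} - V ` J"
  have xS: "x \<in> S" using x False unfolding S_def by auto
  have inj: "inj_on \<pi> {1..n}" using perm permutes_inj_on by blast
  have img: "\<pi> ` {1..n} = {1..n}" using perm permutes_image by blast
  have DJ: "D ` J \<subseteq> {1..n}" "V ` J \<subseteq> {1..n}" using rng by auto
  have imgDJ: "\<pi> ` (D ` J) = V ` J" using map by force
  have imgS: "\<pi> ` S = T" unfolding S_def T_def
    using inj_on_image_set_diff[OF inj _ DJ(1)] img imgDJ by auto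
  have injS: "inj_on \<pi> S" using inj unfolding S_def by (rule inj_on_subset) auto
  have lt: "\<And>y. y \<in> S \<Longrightarrow> \<pi> ` {s \<in> S. s < y} = {t \<in> T. t < \<pi> y}"
  proof -
    fix y assume y: "y \<in> S"
    show "\<pi> ` {s \<in> S. s < y} = {t \<in> T. t < \<pi> y}"
    proof (rule set_eqI, rule iffI)
      fix t assume "t \<in> \<pi> ` {s \<in> S. s < y}"
      then obtain s where s: "s \<in> S" "s < y" "t = \<pi> s" by auto
      then show "t \<in> {t \<in> T. t < \<pi> y}" using mono[of s y] y imgS unfolding S_def by auto
    next
      fix t assume t: "t \<in> {t \<in> T. t < \<pi> y}"
      then obtain s where s: "s \<in> S" "t = \<pi> s" using imgS by auto
      have "s < y"
      proof (rule ccontr)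
        assume "\<not> s < y"
        then have "y = s \<or> y < s" by auto
        then have "\<pi> y \<le> \<pi> s" using mono[of y s] s y unfolding S_def by auto
        then show False using t s by auto
      qed
      then show "t \<in> \<pi> ` {s \<in> S. s < y}" using s by auto
    qed
  qed
  have cardS: "\<And>y. y \<in> S \<Longrightarrow> card {s \<in> S. s < y} = card {t \<in> T. t < \<pi> y}"
  proof -
    fix y assume y: "y \<in> S"
    have "inj_on \<pi> {s \<in> S. s < y}" using injS by (rule inj_on_subset) auto
    then show "card {s \<in> S. s < y} = card {t \<in> T. t < \<pi> y}" using lt[OF y] card_image by fastforce
  qed
  have xn: "x \<le> Suc n" using x by auto
  have cS: "card {s \<in> S. s < x} + card {j \<in> J. D j < x} = x - 1"
    using count_split[OF DJ(1) xn] card_lt_img[OF iD] unfolding S_def by auto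
  have cT: "card {t \<in> T. t < x} + card {j \<in> J. V j < x} = x - 1"
    using count_split[OF DJ(2) xn] card_lt_img[OF iV] unfolding T_def by auto
  have sub: "{j \<in> J. V j < x} \<subseteq> {j \<in> J. D j < x}" using DV by force
  have finJ: "finite {j \<in> J. D j < x}" using fJ by auto
  show ?thesis
  proof
    assume fx: "\<pi> x = x"
    show "\<not> (\<exists>j\<in>J. D j \<le> x \<and> x \<le> V j)"
    proof
      assume "\<exists>j\<in>J. D j \<le> x \<and> x \<le> V j"
      then obtain j where j: "j \<in> J" "D j \<le> x" "x \<le> V j" by auto
      have "x \<in> T" using xS imgS fx by force
      then have "x \<noteq> V j" using j unfolding T_def by auto
      moreover have "x \<noteq> D j" using False j by auto
      ultimately have jj: "D j < x" "x < V j" using j by auto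
      have "card {s \<in> S. s < x} = card {t \<in> T. t < x}" using cardS[OF xS] fx by auto
      then have eqc: "card {j \<in> J. D j < x} = card {j \<in> J. V j < x}" using cS cT by auto
      have "j \<in> {j \<in> J. D j < x}" "j \<notin> {j \<in> J. V j < x}" using j jj by auto
      then have "{j \<in> J. V j < x} \<subset> {j \<in> J. D j < x}" using sub by blast
      then have "card {j \<in> J. V j < x} < card {j \<in> J. D j < x}" using psubset_card_mono[OF finJ] by blast
      then show False using eqc by auto
    qed
  next
    assume nj: "\<not> (\<exists>j\<in>J. D j \<le> x \<and> x \<le> V j)"
    have "{j \<in> J. V j < x} = {j \<in> J. D j < x}" using sub nj by force
    then have eqc: "card {s \<in> S. s < x} = card {t \<in> T. t < x}" using cS cT by auto
    have xT: "x \<in> T" using x nj DV unfolding T_def by force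
    have yT: "\<pi> x \<in> T" using xS imgS by auto
    have finT: "finite T" unfolding T_def by auto
    have c2: "card {t \<in> T. t < \<pi> x} = card {t \<in> T. t < x}" using cardS[OF xS] eqc by auto
    show "\<pi> x = x"
    proof (rule ccontr)
      assume "\<pi> x \<noteq> x"
      then consider "\<pi> x < x" | "x < \<pi> x" by linarith
      then show False
      proof cases
        case 1
        then have "{t \<in> T. t < \<pi> x} \<subset> {t \<in> T. t < x}" using yT by auto
        then have "card {t \<in> T. t < \<pi> x} < card {t \<in> T. t < x}" using finT by (intro psubset_card_mono) auto
        then show False using c2 by auto
      next
        case 2
        then have "{t \<in> T. t < x} \<subset> {t \<in> T. t < \<pi> x}" using xT by auto
        then have "card {t \<in> T. t < x} < card {t \<in> T. t < \<pi> x}" using finT by (intro psubset_card_mono) auto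
        then show False using c2 by auto
      qed
    qed
  qed
qed


theorem mainTheorem1:
  fixes n :: nat and \<pi> :: "nat \<Rightarrow> nat" and c :: "nat list"
  assumes "n \<ge> 1"
    and "\<pi> permutes {1..n}"
    and "avoids_321 n \<pi>"
    and "kupisch c" and "length c = n + 1"
    and "BJS_perm c \<pi>"
  shows "card {i. i < n + 1 \<and> inj_dim_eq c (i, c ! i) 1} = card {x \<in> {1..n}. \<pi> x = x}"
proof -
  have K: "kupisch c" and Lc: "length c = Suc n" using assms by auto
  note JJd = JJ_def[OF K Lc]
  define J where "J = JJ c n"
  define D where "D = (\<lambda>j. n + 1 - ff c j)"
  define V where "V = (\<lambda>j::nat. n - j)"
  have ln: "length c - 1 = n" using Lc by auto
  have vJ: "valleys c = (\<lambda>j. 2*n - 1 - ee c j) ` J" using valleys_eq[OF K Lc] unfolding J_def .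
  have Ds: "downs_before c ` valleys c = D ` J"
    unfolding vJ image_comp D_def using valley_counts(2)[OF K Lc] unfolding J_def
    by (intro image_cong) auto
  have B: "\<pi> permutes {1..n}"
     "\<And>p. p \<in> valleys c \<Longrightarrow> \<pi> (downs_before c p) = ups_before c p + 1"
     "\<And>x y. x \<in> {1..n} - D ` J \<Longrightarrow> y \<in> {1..n} - D ` J \<Longrightarrow> x < y \<Longrightarrow> \<pi> x < \<pi> y"
    using assms(6) unfolding BJS_perm_def Let_def ln Ds by auto
  have Jn: "\<And>j. j \<in> J \<Longrightarrow> j < n \<and> ff c j < ff c (Suc j)" unfolding J_def JJd by auto
  have map: "\<And>j. j \<in> J \<Longrightarrow> \<pi> (D j) = V j"
  proof -
    fix j assume j: "j \<in> J"
    have "2*n - 1 - ee c j \<in> valleys c" using vJ j by auto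
    then have "\<pi> (downs_before c (2*n - 1 - ee c j)) = ups_before c (2*n - 1 - ee c j) + 1" using B(2) by auto
    then show "\<pi> (D j) = V j" using valley_counts[OF K Lc, of j] j Jn[OF j] unfolding J_def D_def V_def by auto
  qed
  have finJ: "finite J" using Jn by (meson finite_nat_set_iff_bounded)
  have DV: "\<And>j. j \<in> J \<Longrightarrow> D j < V j" unfolding D_def V_def using Jn ff_ge2[OF K Lc] by fastforce
  have ffle: "\<And>j. j \<in> J \<Longrightarrow> ff c j \<le> n"
  proof -
    fix j assume j: "j \<in> J"
    then show "ff c j \<le> n" using Jn[OF j] ff_le[OF K Lc, of "Suc j"] by auto
  qed
  have rng: "\<And>j. j \<in> J \<Longrightarrow> D j \<in> {1..n} \<and> V j \<in> {1..n}"
  proof -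
    fix j assume j: "j \<in> J"
    have "j < n" "ff c j \<le> n" "Suc j \<le> ff c j" using Jn[OF j] ffle[OF j] ff_ge[OF K Lc, of j] by auto
    then show "D j \<in> {1..n} \<and> V j \<in> {1..n}" unfolding D_def V_def by auto
  qed
  have iV: "inj_on V J" unfolding V_def using Jn by (intro inj_onI) fastforce
  have ffs: "\<And>j k. j \<in> J \<Longrightarrow> k \<in> J \<Longrightarrow> j < k \<Longrightarrow> ff c j < ff c k"
  proof -
    fix j k assume a: "j \<in> J" "k \<in> J" "j < k"
    then show "ff c j < ff c k" using Jn[OF a(1)] Jn[OF a(2)] ff_mono[OF K Lc, of "Suc j" k] by auto
  qed
  have iD: "inj_on D J"
  proof (rule inj_onI)
    fix j k assume a: "j \<in> J" "k \<in> J" "D j = D k"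
    then have "ff c j = ff c k" using ffle unfolding D_def by fastforce
    then show "j = k" using ffs[OF a(1) a(2)] ffs[OF a(2) a(1)] by (metis less_irrefl linorder_neqE_nat)
  qed
  have fixc: "\<And>x. x \<in> {1..n} \<Longrightarrow> \<pi> x = x \<longleftrightarrow> \<not> (\<exists>j\<in>J. D j \<le> x \<and> x \<le> V j)"
    using fix_char[OF B(1) finJ DV iD iV rng map B(3)] by blast
  define Ls where "Ls = {i. 1 \<le> i \<and> i \<le> n \<and> \<not> (\<exists>j\<in>J. j < i \<and> i \<le> ff c j)}"
  have L: "{i. i < n + 1 \<and> inj_dim_eq c (i, c ! i) 1} = Ls"
  proof (rule set_eqI)
    fix i
    show "i \<in> {i. i < n + 1 \<and> inj_dim_eq c (i, c ! i) 1} \<longleftrightarrow> i \<in> Ls"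
      using lhs_char[OF K Lc, of i] unfolding Ls_def J_def JJd by auto
  qed
  have R: "{x \<in> {1..n}. \<pi> x = x} = (\<lambda>i. n + 1 - i) ` Ls"
  proof (rule set_eqI, rule iffI)
    fix x assume x: "x \<in> {x \<in> {1..n}. \<pi> x = x}"
    then have nj: "\<not> (\<exists>j\<in>J. D j \<le> x \<and> x \<le> V j)" using fixc by auto
    have "n + 1 - x \<in> Ls" unfolding Ls_def
    proof (intro CollectI conjI notI)
      assume "\<exists>j\<in>J. j < n + 1 - x \<and> n + 1 - x \<le> ff c j"
      then obtain j where j: "j \<in> J" "j < n + 1 - x" "n + 1 - x \<le> ff c j" by auto
      then show False using nj ffle[OF j(1)] x unfolding D_def V_def by force
    qed (use x in auto)
    then show "x \<in> (\<lambda>i. n + 1 - i) ` Ls" using x by (intro image_eqI[of _ _ "n + 1 - x"]) auto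
  next
    fix x assume "x \<in> (\<lambda>i. n + 1 - i) ` Ls"
    then obtain i where i: "i \<in> Ls" "x = n + 1 - i" by auto
    have x: "x \<in> {1..n}" using i unfolding Ls_def by auto
    have "\<not> (\<exists>j\<in>J. D j \<le> x \<and> x \<le> V j)"
    proof
      assume "\<exists>j\<in>J. D j \<le> x \<and> x \<le> V j"
      then obtain j where j: "j \<in> J" "D j \<le> x" "x \<le> V j" by auto
      have "j < i" "i \<le> ff c j" using j i ffle[OF j(1)] Jn[OF j(1)] unfolding D_def V_def Ls_def by auto
      then show False using i j unfolding Ls_def by auto
    qed
    then show "x \<in> {x \<in> {1..n}. \<pi> x = x}" using fixc x by auto
  qed
  have "inj_on (\<lambda>i. n + 1 - i) Ls" unfolding Ls_def by (intro inj_onI) auto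
  then show ?thesis unfolding L R by (simp add: card_image)
qed

end
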